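(* Let $(p_k)_{k\ge0}$ be a probability distribution with $\mu:=\sum_kkp_k\in(0,\infty)$ and $\sum_kk(k-2)p_k>0$. If $\psi(H)=1$ for all $H$, then $$\sigma_\psi^2=f(\zeta)+\frac{\mu^2\zeta^2}{\mu-f''(\zeta)}+2\frac{\mu^3\zeta^4}{(\mu-f''(\zeta))^2}-f(\zeta^2)-2\frac{\mu\zeta^2}{\mu-f''(\zeta)}f'(\zeta^2)-\frac{\mu^2}{(\mu-f''(\zeta))^2}\big(\zeta^4f''(\zeta^2)+\zeta^2f'(\zeta^2)\big).$$
   Context: $f(z):=\sum_kp_kz^k$ and $\zeta$ is the unique root in $[0,1)$ of $f'(\zeta)=\mu\zeta$. $\mathcal T$ is the Galton–Watson tree whose root has offspring distribution $(p_k)$ and other vertices offspring distribution $\hat D-1$, $P(\hat D=k)=kp_k/\mu$, regarded as an unlabelled unrooted tree; $|T|$, $e(T)$, $n_k(T)$ are numbers of vertices, edges and vertices of degree $k$. $\mathbb E^\circ g(\mathcal T):=E(g(\mathcal T);|\mathcal T|<\infty)$; for a graph functional $\psi$, $\sigma_\psi^2:=\mathbb E^\circ(|\mathcal T|\psi(\mathcal T)^2)+\frac2\mu(\mathbb E^\circ(e(\mathcal T)\psi(\mathcal T)))^2-\sum_{k\ge0}\frac1{p_k}(\mathbb E^\circ(n_k(\mathcal T)\psi(\mathcal T)))^2$ with $0/0=0$. *)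

theory Defs
  imports "HOL-Analysis.Analysis"
begin

text \<open>Finite rooted ordered (plane) trees; a vertex is a list of its children.\<close>
datatype ptree = Node "ptree list"

definition gf :: "(nat \<Rightarrow> real) \<Rightarrow> real \<Rightarrow> real" where
  "gf p z = (\<Sum>k. p k * z ^ k)"

definition mu :: "(nat \<Rightarrow> real) \<Rightarrow> real" where
  "mu p = (\<Sum>k. real k * p k)"

definition zeta :: "(nat \<Rightarrow> real) \<Rightarrow> real" where
  "zeta p = (THE z. 0 \<le> z \<and> z < 1 \<and> deriv (gf p) z = mu p * z)"

text \<open>Offspring law of non-root vertices: P(hat D - 1 = j) = (j+1) p_(j+1) / mu.\<close>
definition qhat :: "(nat \<Rightarrow> real) \<Rightarrow> nat \<Rightarrow> real" where
  "qhat p j = real (Suc j) * p (Suc j) / mu p"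

text \<open>Probability that the Galton-Watson subtree of a non-root vertex equals t.\<close>
fun gw_sub :: "(nat \<Rightarrow> real) \<Rightarrow> ptree \<Rightarrow> real" where
  "gw_sub p (Node ts) = qhat p (length ts) * prod_list (map (gw_sub p) ts)"

text \<open>Probability that the Galton-Watson tree (root law p, others hat D - 1) equals t.\<close>
fun gw_prob :: "(nat \<Rightarrow> real) \<Rightarrow> ptree \<Rightarrow> real" where
  "gw_prob p (Node ts) = p (length ts) * prod_list (map (gw_sub p) ts)"

text \<open>E\<degree> g(T) = E(g(T); |T| < infinity) = sum over finite trees of P(T = t) g(t).\<close>
definition Efin :: "(nat \<Rightarrow> real) \<Rightarrow> (ptree \<Rightarrow> real) \<Rightarrow> real" where
  "Efin p g = (\<Sum>\<^sub>\<infinity>t\<in>UNIV. gw_prob p t * g t)"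

fun nverts :: "ptree \<Rightarrow> nat" where
  "nverts (Node ts) = Suc (sum_list (map nverts ts))"

definition nedges :: "ptree \<Rightarrow> nat" where
  "nedges t = nverts t - 1"

text \<open>count of non-root vertices of degree k (degree = children + 1)\<close>
fun ndeg_sub :: "nat \<Rightarrow> ptree \<Rightarrow> nat" where
  "ndeg_sub k (Node ts) = (if Suc (length ts) = k then 1 else 0) + sum_list (map (ndeg_sub k) ts)"

text \<open>count of vertices of degree k (root degree = number of children)\<close>
fun ndeg :: "nat \<Rightarrow> ptree \<Rightarrow> nat" where
  "ndeg k (Node ts) = (if length ts = k then 1 else 0) + sum_list (map (ndeg_sub k) ts)"

text \<open>sigma_psi^2 (with 0/0 = 0, as in Isabelle's division).\<close>
definition sigma_sq :: "(nat \<Rightarrow> real) \<Rightarrow> (ptree \<Rightarrow> real) \<Rightarrow> real" where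
  "sigma_sq p psi =
     Efin p (\<lambda>t. real (nverts t) * (psi t)^2)
     + 2 / mu p * (Efin p (\<lambda>t. real (nedges t) * psi t))^2
     - (\<Sum>k. (Efin p (\<lambda>t. real (ndeg k t) * psi t))^2 / p k)"

end

theory Submission
  imports Defs
begin


definition lsts :: "'a set \<Rightarrow> nat \<Rightarrow> 'a list set" where
  "lsts G j = {xs. set xs \<subseteq> G \<and> length xs = j}"

lemma finite_lsts: "finite G \<Longrightarrow> finite (lsts G j)"
  unfolding lsts_def by (rule finite_lists_length_eq)

lemma lsts_Suc: "lsts G (Suc j) = (\<lambda>(x,ys). x#ys) ` (G \<times> lsts G j)"
  unfolding lsts_def by (auto simp: length_Suc_conv)

lemma inj_Cons: "inj_on (\<lambda>(x,ys). x#ys) A"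
  by (auto simp: inj_on_def)

lemma sum_lsts_prod:
  fixes w :: "'a \<Rightarrow> real"
  assumes "finite G"
  shows "(\<Sum>xs\<in>lsts G j. prod_list (map w xs)) = (sum w G)^j"
proof (induction j)
  case 0
  have "lsts G 0 = {[]}" by (auto simp: lsts_def)
  then show ?case by simp
next
  case (Suc j)
  have "(\<Sum>xs\<in>lsts G (Suc j). prod_list (map w xs))
      = (\<Sum>(x,ys)\<in>G \<times> lsts G j. w x * prod_list (map w ys))"
    unfolding lsts_Suc by (subst sum.reindex[OF inj_Cons]) (simp add: case_prod_unfold sum.cartesian_product')
  also have "\<dots> = (\<Sum>x\<in>G. \<Sum>ys\<in>lsts G j. w x * prod_list (map w ys))"
    by (simp add: sum.cartesian_product'; rule sum.swap)
  also have "\<dots> = sum w G * (\<Sum>ys\<in>lsts G j. prod_list (map w ys))"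
    by (simp add: sum_product)
  finally show ?case using Suc by simp
qed

lemma sum_lsts_prod_sum:
  fixes w g :: "'a \<Rightarrow> real"
  assumes "finite G"
  shows "(\<Sum>xs\<in>lsts G j. prod_list (map w xs) * sum_list (map g xs))
       = real j * (sum w G)^(j-1) * (\<Sum>t\<in>G. w t * g t)"
proof (induction j)
  case 0
  then show ?case by (simp add: lsts_def)
next
  case (Suc j)
  have "(\<Sum>xs\<in>lsts G (Suc j). prod_list (map w xs) * sum_list (map g xs))
      = (\<Sum>(x,ys)\<in>G \<times> lsts G j. w x * prod_list (map w ys) * (g x + sum_list (map g ys)))"
    unfolding lsts_Suc by (subst sum.reindex[OF inj_Cons]) (simp add: case_prod_unfold sum.cartesian_product')
  also have "\<dots> = (\<Sum>x\<in>G. \<Sum>ys\<in>lsts G j. w x * g x * prod_list (map w ys)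
                     + w x * (prod_list (map w ys) * sum_list (map g ys)))"
    by (simp add: sum.cartesian_product' algebra_simps sum.distrib; subst (1 2) sum.swap; rule refl)
  also have "\<dots> = (\<Sum>t\<in>G. w t * g t) * (\<Sum>ys\<in>lsts G j. prod_list (map w ys))
                + sum w G * (\<Sum>ys\<in>lsts G j. prod_list (map w ys) * sum_list (map g ys))"
    by (simp add: sum.distrib sum_product)
  also have "\<dots> = (\<Sum>t\<in>G. w t * g t) * (sum w G)^j
                + sum w G * (real j * (sum w G)^(j-1) * (\<Sum>t\<in>G. w t * g t))"
    using Suc sum_lsts_prod[OF assms] by simp
  also have "\<dots> = real (Suc j) * (sum w G)^(Suc j - 1) * (\<Sum>t\<in>G. w t * g t)"
    by (cases j) (simp_all add: algebra_simps)
  finally show ?case .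
qed

definition phi :: "(nat \<Rightarrow> real) \<Rightarrow> (nat \<Rightarrow> real) \<Rightarrow> (ptree \<Rightarrow> real) \<Rightarrow> (ptree \<Rightarrow> real) \<Rightarrow> ptree \<Rightarrow> real" where
  "phi r b w g t = (case t of Node ts \<Rightarrow>
     r (length ts) * prod_list (map w ts) * (b (length ts) + sum_list (map g ts)))"

lemma phi_Node[simp]: "phi r b w g (Node ts) =
     r (length ts) * prod_list (map w ts) * (b (length ts) + sum_list (map g ts))"
  by (simp add: phi_def)

definition trm :: "(nat \<Rightarrow> real) \<Rightarrow> (nat \<Rightarrow> real) \<Rightarrow> real \<Rightarrow> real \<Rightarrow> nat \<Rightarrow> real" where
  "trm r b x y j = r j * (b j * x^j + real j * x^(j-1) * y)"

definition Fset :: "ptree set \<Rightarrow> nat \<Rightarrow> ptree set" where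
  "Fset G L = Node ` (\<Union>j<L. lsts G j)"

lemma finite_Fset: "finite G \<Longrightarrow> finite (Fset G L)"
  unfolding Fset_def by (auto intro: finite_lsts)

lemma sum_Fset:
  assumes "finite G"
  shows "sum (phi r b w g) (Fset G L) = (\<Sum>j<L. trm r b (sum w G) (\<Sum>t\<in>G. w t * g t) j)"
proof -
  have inj: "inj_on Node A" for A by (auto simp: inj_on_def)
  have "sum (phi r b w g) (Fset G L) = (\<Sum>xs\<in>(\<Union>j<L. lsts G j). phi r b w g (Node xs))"
    unfolding Fset_def by (subst sum.reindex[OF inj]) simp
  also have "\<dots> = (\<Sum>j<L. \<Sum>xs\<in>lsts G j. phi r b w g (Node xs))"
    by (rule sum.UNION_disjoint) (auto simp: finite_lsts assms lsts_def intro: finite_lists_length_eq)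
  also have "\<dots> = (\<Sum>j<L. \<Sum>xs\<in>lsts G j. r j * (b j * prod_list (map w xs)
                   + prod_list (map w xs) * sum_list (map g xs)))"
    by (intro sum.cong refl) (auto simp: lsts_def algebra_simps)
  also have "\<dots> = (\<Sum>j<L. trm r b (sum w G) (\<Sum>t\<in>G. w t * g t) j)"
    by (intro sum.cong refl)
       (simp add: sum.distrib sum_distrib_left[symmetric] sum_lsts_prod sum_lsts_prod_sum assms trm_def)
  finally show ?thesis .
qed

fun kids :: "ptree \<Rightarrow> ptree list" where
  "kids (Node ts) = ts"

definition kidset :: "ptree set \<Rightarrow> ptree set" where
  "kidset F = (\<Union>t\<in>F. set (kids t))"

definition kidlen :: "ptree set \<Rightarrow> nat" where
  "kidlen F = Suc (\<Sum>t\<in>F. length (kids t))"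

lemma finite_kidset: "finite F \<Longrightarrow> finite (kidset F)"
  by (simp add: kidset_def)

lemma F_sub_Fset:
  assumes "finite F"
  shows "F \<subseteq> Fset (kidset F) (kidlen F)"
proof
  fix t assume t: "t \<in> F"
  obtain ts where ts: "t = Node ts" by (cases t)
  have "length ts \<le> (\<Sum>t\<in>F. length (kids t))"
    using member_le_sum[OF t, of "\<lambda>t. length (kids t)"] assms ts by simp
  moreover have "set ts \<subseteq> kidset F" using t ts by (auto simp: kidset_def)
  ultimately show "t \<in> Fset (kidset F) (kidlen F)"
    unfolding Fset_def kidlen_def lsts_def using ts by (auto intro!: image_eqI)
qed

lemma prod_list_nonneg': "(\<And>x. w x \<ge> (0::real)) \<Longrightarrow> prod_list (map w xs) \<ge> 0"
  by (induction xs) auto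

lemma sum_list_nonneg': "(\<And>x. g x \<ge> (0::real)) \<Longrightarrow> sum_list (map g xs) \<ge> 0"
  by (induction xs) auto

lemma phi_nonneg:
  assumes "\<And>j. r j \<ge> 0" "\<And>j. b j \<ge> 0" "\<And>t. w t \<ge> 0" "\<And>t. g t \<ge> 0"
  shows "phi r b w g t \<ge> 0"
  using assms prod_list_nonneg'[of w] sum_list_nonneg'[of g]
  by (cases t) (auto intro!: mult_nonneg_nonneg add_nonneg_nonneg)

lemma trm_mono:
  assumes "\<And>j. r j \<ge> 0" "\<And>j. b j \<ge> 0" "0 \<le> x" "x \<le> x'" "0 \<le> y" "y \<le> y'"
  shows "trm r b x y j \<le> trm r b x' y' j"
  unfolding trm_def using assms
  by (intro mult_left_mono add_mono mult_mono power_mono) auto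

lemma trm_nonneg:
  assumes "\<And>j. r j \<ge> 0" "\<And>j. b j \<ge> 0" "0 \<le> x" "0 \<le> y"
  shows "trm r b x y j \<ge> 0"
  unfolding trm_def using assms by auto

lemma sum_le_Fset:
  assumes "finite F" "\<And>j. r j \<ge> 0" "\<And>j. b j \<ge> 0" "\<And>t. w t \<ge> 0" "\<And>t. g t \<ge> 0"
  shows "sum (phi r b w g) F \<le>
     (\<Sum>j<kidlen F. trm r b (sum w (kidset F)) (\<Sum>t\<in>kidset F. w t * g t) j)"
proof -
  have "sum (phi r b w g) F \<le> sum (phi r b w g) (Fset (kidset F) (kidlen F))"
    by (rule sum_mono2[OF finite_Fset[OF finite_kidset[OF assms(1)]] F_sub_Fset[OF assms(1)]])
       (rule phi_nonneg, use assms in auto)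
  then show ?thesis using sum_Fset[OF finite_kidset[OF assms(1)]] by simp
qed



lemma phi_has_sum:
  assumes r: "\<And>j. r j \<ge> 0" and b: "\<And>j. b j \<ge> 0"
    and w: "\<And>t. w t \<ge> 0" and g: "\<And>t. g t \<ge> 0"
    and hw: "(w has_sum W) UNIV" and hv: "((\<lambda>t. w t * g t) has_sum V) UNIV"
    and hs: "(trm r b W V) sums S"
  shows "(phi r b w g has_sum S) UNIV"
proof -
  have W0: "W \<ge> 0" using has_sum_nonneg[OF hw] w by auto
  have V0: "V \<ge> 0" using has_sum_nonneg[OF hv] w g by auto
  have trm0: "\<And>j. trm r b W V j \<ge> 0" using trm_nonneg[OF r b W0 V0] .
  have sW: "sum w G \<le> W" if "finite G" for G
    by (rule finite_sum_le_has_sum[OF hw that]) (use w in auto)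
  have sV: "(\<Sum>t\<in>G. w t * g t) \<le> V" if "finite G" for G
    by (rule finite_sum_le_has_sum[OF hv that]) (use w g in auto)
  have Seq: "S = suminf (trm r b W V)" using hs by (simp add: sums_iff)
  have part: "(\<Sum>j<L. trm r b W V j) \<le> S" for L
    unfolding Seq by (rule sum_le_suminf) (use hs trm0 in \<open>auto simp: sums_iff\<close>)
  have fin: "sum (phi r b w g) F \<le> S" if "finite F" for F
  proof -
    have "sum (phi r b w g) F \<le>
     (\<Sum>j<kidlen F. trm r b (sum w (kidset F)) (\<Sum>t\<in>kidset F. w t * g t) j)"
      by (rule sum_le_Fset[OF that r b w g])
    also have "\<dots> \<le> (\<Sum>j<kidlen F. trm r b W V j)"
      by (intro sum_mono trm_mono r b)
         (auto intro!: sum_nonneg mult_nonneg_nonneg w g sW sV finite_kidset that)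
    also have "\<dots> \<le> S" by (rule part)
    finally show ?thesis .
  qed
  have phi0: "\<And>t. phi r b w g t \<ge> 0" by (rule phi_nonneg[OF r b w g])
  have summ: "phi r b w g summable_on UNIV"
    by (rule nonneg_bdd_above_summable_on) (use phi0 fin in \<open>auto intro!: bdd_aboveI\<close>)
  have le: "infsum (phi r b w g) UNIV \<le> S"
    by (rule infsum_le_finite_sums[OF summ fin])
  have ge_part: "(\<Sum>j<L. trm r b W V j) \<le> infsum (phi r b w g) UNIV" for L
  proof (rule tendsto_le[OF finite_subsets_at_top_neq_bot])
    show "((\<lambda>G. infsum (phi r b w g) UNIV) \<longlongrightarrow> infsum (phi r b w g) UNIV) (finite_subsets_at_top UNIV)"
      by simp
    have tw: "(sum w \<longlongrightarrow> W) (finite_subsets_at_top UNIV)" using hw by (simp add: has_sum_def)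
    have tv: "((\<lambda>G. \<Sum>t\<in>G. w t * g t) \<longlongrightarrow> V) (finite_subsets_at_top UNIV)"
      using hv by (simp add: has_sum_def)
    show "((\<lambda>G. \<Sum>j<L. trm r b (sum w G) (\<Sum>t\<in>G. w t * g t) j) \<longlongrightarrow> (\<Sum>j<L. trm r b W V j))
            (finite_subsets_at_top UNIV)"
      unfolding trm_def by (intro tendsto_intros tw tv)
    show "\<forall>\<^sub>F G in finite_subsets_at_top UNIV.
            (\<Sum>j<L. trm r b (sum w G) (\<Sum>t\<in>G. w t * g t) j) \<le> infsum (phi r b w g) UNIV"
    proof (rule eventually_finite_subsets_at_top_weakI)
      fix G :: "ptree set" assume "finite G"
      then have "(\<Sum>j<L. trm r b (sum w G) (\<Sum>t\<in>G. w t * g t) j) = sum (phi r b w g) (Fset G L)"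
        by (simp add: sum_Fset)
      also have "\<dots> \<le> infsum (phi r b w g) UNIV"
        by (rule finite_sum_le_infsum[OF summ]) (use \<open>finite G\<close> phi0 in \<open>auto intro: finite_Fset\<close>)
      finally show "(\<Sum>j<L. trm r b (sum w G) (\<Sum>t\<in>G. w t * g t) j) \<le> infsum (phi r b w g) UNIV" .
    qed
  qed
  have ge: "S \<le> infsum (phi r b w g) UNIV"
    unfolding Seq by (rule suminf_le_const[OF _ ge_part]) (use hs in \<open>simp add: sums_iff\<close>)
  have "infsum (phi r b w g) UNIV = S" using le ge by simp
  then show ?thesis using summ by (metis has_sum_infsum)
qed

fun Tset :: "nat \<Rightarrow> ptree set" where
  "Tset 0 = {}"
| "Tset (Suc n) = Node ` {xs. set xs \<subseteq> Tset n}"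

lemma Tset_Suc_mono: "Tset n \<subseteq> Tset (Suc n)"
  by (induction n) auto

lemma Tset_mono: "n \<le> m \<Longrightarrow> Tset n \<subseteq> Tset m"
  using lift_Suc_mono_le[of Tset, OF Tset_Suc_mono] by blast

lemma finite_in_Tset:
  "finite A \<Longrightarrow> (\<forall>t\<in>A. \<exists>n. t \<in> Tset n) \<Longrightarrow> \<exists>n. A \<subseteq> Tset n"
proof (induction A rule: finite_induct)
  case empty
  then show ?case by auto
next
  case (insert x A)
  then obtain n m where "A \<subseteq> Tset n" "x \<in> Tset m" by auto
  then have "insert x A \<subseteq> Tset (max n m)"
    using Tset_mono[of n "max n m"] Tset_mono[of m "max n m"] by auto
  then show ?case by blast
qed

lemma ex_Tset: "\<exists>n. t \<in> Tset n"
proof (induction t)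
  case (Node ts)
  then obtain n where "set ts \<subseteq> Tset n" using finite_in_Tset[of "set ts"] by auto
  then have "Node ts \<in> Tset (Suc n)" by auto
  then show ?case by blast
qed

lemma finite_sub_Tset: "finite F \<Longrightarrow> \<exists>n. F \<subseteq> Tset n"
  using finite_in_Tset ex_Tset by blast

lemma kidset_Tset: "F \<subseteq> Tset (Suc n) \<Longrightarrow> kidset F \<subseteq> Tset n"
  unfolding kidset_def by fastforce

lemma height_bound:
  assumes q: "\<And>j. q j \<ge> 0" and a: "\<And>j. a j \<ge> 0"
    and w: "\<And>t. w t \<ge> 0" and g: "\<And>t. g t \<ge> 0"
    and wdef: "\<And>t. w t = phi q (\<lambda>_. 1) w (\<lambda>_. 0) t"
    and wg: "\<And>t. w t * g t = phi q a w g t"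
    and s: "s \<ge> 0" and K: "K \<ge> 0"
    and hs: "\<And>L. (\<Sum>j<L. trm q (\<lambda>_. 1) s 0 j) \<le> s"
    and hK: "\<And>L. (\<Sum>j<L. trm q a s K j) \<le> K"
    and F: "finite F"
  shows "sum w F \<le> s \<and> (\<Sum>t\<in>F. w t * g t) \<le> K"
proof -
  have "\<forall>F. finite F \<and> F \<subseteq> Tset n \<longrightarrow> sum w F \<le> s \<and> (\<Sum>t\<in>F. w t * g t) \<le> K" for n
  proof (induction n)
    case 0
    then show ?case using s K by auto
  next
    case (Suc n)
    show ?case
    proof (intro allI impI)
      fix F assume FF: "finite F \<and> F \<subseteq> Tset (Suc n)"
      let ?G = "kidset F"
      have G: "finite ?G" "?G \<subseteq> Tset n" using FF finite_kidset kidset_Tset by auto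
      with Suc have IH: "sum w ?G \<le> s" "(\<Sum>t\<in>?G. w t * g t) \<le> K" by auto
      have G0: "sum w ?G \<ge> 0" "(\<Sum>t\<in>?G. w t * g t) \<ge> 0"
        by (auto intro!: sum_nonneg mult_nonneg_nonneg w g)
      have "sum w F = sum (phi q (\<lambda>_. 1) w (\<lambda>_. 0)) F" using wdef by simp
      also have "\<dots> \<le> (\<Sum>j<kidlen F. trm q (\<lambda>_. 1) (sum w ?G) (\<Sum>t\<in>?G. w t * 0) j)"
        by (rule sum_le_Fset) (use FF q w in auto)
      also have "\<dots> \<le> (\<Sum>j<kidlen F. trm q (\<lambda>_. 1) s 0 j)"
        by (intro sum_mono trm_mono q) (use IH G0 in auto)
      also have "\<dots> \<le> s" by (rule hs)
      finally have 1: "sum w F \<le> s" .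
      have "(\<Sum>t\<in>F. w t * g t) = sum (phi q a w g) F" using wg by simp
      also have "\<dots> \<le> (\<Sum>j<kidlen F. trm q a (sum w ?G) (\<Sum>t\<in>?G. w t * g t) j)"
        by (rule sum_le_Fset) (use FF q a w g in auto)
      also have "\<dots> \<le> (\<Sum>j<kidlen F. trm q a s K j)"
        by (intro sum_mono trm_mono q a) (use IH G0 in auto)
      also have "\<dots> \<le> K" by (rule hK)
      finally show "sum w F \<le> s \<and> (\<Sum>t\<in>F. w t * g t) \<le> K" using 1 by simp
    qed
  qed
  then show ?thesis using finite_sub_Tset[OF F] F by blast
qed



definition F1 :: "(nat \<Rightarrow> real) \<Rightarrow> real \<Rightarrow> real" where
  "F1 p x = (\<Sum>n. diffs p n * x^n)"
definition F2 :: "(nat \<Rightarrow> real) \<Rightarrow> real \<Rightarrow> real" where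
  "F2 p x = (\<Sum>n. diffs (diffs p) n * x^n)"

locale offs =
  fixes p :: "nat \<Rightarrow> real"
  assumes nonneg: "\<And>k. p k \<ge> 0"
    and prob: "p sums 1"
    and mean_fin: "summable (\<lambda>k. real k * p k)"
    and mean_pos: "mu p > 0"
    and supcrit: "\<not> summable (\<lambda>k. real k * (real k - 2) * p k)
                  \<or> (\<Sum>k. real k * (real k - 2) * p k) > 0"
begin

lemma sumP: "\<bar>x\<bar> < 1 \<Longrightarrow> summable (\<lambda>n. p n * x^n)"
proof (rule summable_comparison_test'[of p 0])
  show "summable p" using prob by (simp add: sums_iff)
  fix n assume "\<bar>x\<bar> < 1"
  then have "\<bar>x\<bar>^n \<le> 1" by (simp add: power_le_one)
  then show "norm (p n * x^n) \<le> p n"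
    using nonneg[of n] by (simp add: abs_mult power_abs mult_left_le)
qed

lemma sum1: "\<bar>x\<bar> < 1 \<Longrightarrow> summable (\<lambda>n. diffs p n * x^n)"
  by (rule termdiff_converges[of x 1]) (auto intro: sumP)

lemma sum2: "\<bar>x\<bar> < 1 \<Longrightarrow> summable (\<lambda>n. diffs (diffs p) n * x^n)"
  by (rule termdiff_converges[of x 1]) (auto intro: sum1)

lemma DERIV1: "\<bar>x\<bar> < 1 \<Longrightarrow> (gf p has_field_derivative F1 p x) (at x)"
  unfolding gf_def F1_def
  by (rule termdiffs_strong'[of 1]) (auto intro: sumP)

lemma deriv1: "\<bar>x\<bar> < 1 \<Longrightarrow> deriv (gf p) x = F1 p x"
  by (rule DERIV_imp_deriv[OF DERIV1])

lemma deriv2: "\<bar>x\<bar> < 1 \<Longrightarrow> deriv (deriv (gf p)) x = F2 p x"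
proof -
  assume x: "\<bar>x\<bar> < 1"
  have ev: "eventually (\<lambda>y. deriv (gf p) y = F1 p y) (nhds x)"
  proof -
    have "open {y::real. \<bar>y\<bar> < 1}" by (intro open_Collect_less continuous_intros)
    then have "eventually (\<lambda>y. y \<in> {y::real. \<bar>y\<bar> < 1}) (nhds x)"
      using x by (intro eventually_nhds_in_open) auto
    then show ?thesis by eventually_elim (simp add: deriv1)
  qed
  have "deriv (deriv (gf p)) x = deriv (F1 p) x"
    by (rule deriv_cong_ev[OF ev refl])
  also have "\<dots> = F2 p x"
    unfolding F1_def F2_def
    by (rule DERIV_imp_deriv, rule termdiffs_strong'[of 1]) (use x in \<open>auto intro: sum1\<close>)
  finally show ?thesis .
qed

lemma ks1: "\<bar>x\<bar> < 1 \<Longrightarrow> (\<lambda>k. real k * p k * x^(k-1)) sums F1 p x"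
  unfolding F1_def using diffs_equiv[OF sum1] by simp

lemma ks2: "\<bar>x\<bar> < 1 \<Longrightarrow> (\<lambda>k. real k * (real k - 1) * p k * x^(k-2)) sums F2 p x"
proof -
  assume x: "\<bar>x\<bar> < 1"
  have "(\<lambda>n. real n * diffs p n * x^(n - 1)) sums F2 p x"
    unfolding F2_def using diffs_equiv[OF sum2[OF x]] by simp
  then have "(\<lambda>n. real (Suc n) * (real (Suc n) - 1) * p (Suc n) * x^(Suc n - 2)) sums F2 p x"
    by (rule sums_cong[THEN iffD1, rotated]) (simp add: diffs_def algebra_simps)
  then show ?thesis by (subst (asm) sums_Suc_iff) simp
qed

lemma mu_sums: "(\<lambda>k. real k * p k) sums mu p"
  unfolding mu_def using mean_fin by (simp add: summable_sums)

lemma kx_sums: "\<bar>x\<bar> < 1 \<Longrightarrow> (\<lambda>k. real k * p k * x^k) sums (x * F1 p x)"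
proof -
  assume x: "\<bar>x\<bar> < 1"
  have "(\<lambda>k. x * (real k * p k * x^(k-1))) sums (x * F1 p x)"
    by (rule sums_mult[OF ks1[OF x]])
  then show ?thesis
  proof (rule sums_cong[THEN iffD1, rotated])
    fix k show "x * (real k * p k * x ^ (k - 1)) = real k * p k * x ^ k"
      by (cases k) auto
  qed
qed

lemma kkx_sums: "\<bar>x\<bar> < 1 \<Longrightarrow> (\<lambda>k. real k * real k * p k * x^k) sums (x^2 * F2 p x + x * F1 p x)"
proof -
  assume x: "\<bar>x\<bar> < 1"
  have "(\<lambda>k. x^2 * (real k * (real k - 1) * p k * x^(k-2)) + real k * p k * x^k) sums (x^2 * F2 p x + x * F1 p x)"
    by (rule sums_add[OF sums_mult[OF ks2[OF x]] kx_sums[OF x]])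
  then show ?thesis
  proof (rule sums_cong[THEN iffD1, rotated])
    fix k
    show "x\<^sup>2 * (real k * (real k - 1) * p k * x ^ (k - 2)) + real k * p k * x ^ k = real k * real k * p k * x ^ k"
    proof (cases "k \<ge> 2")
      case True
      have "x^2 * x^(k-2) = x^(2 + (k-2))" by (rule power_add[symmetric])
      also have "2 + (k-2) = k" using True by simp
      finally have e: "x^2 * x^(k-2) = x^k" .
      have "x\<^sup>2 * (real k * (real k - 1) * p k * x ^ (k - 2)) = real k * (real k - 1) * p k * (x^2 * x^(k-2))"
        by (simp only: ac_simps)
      also have "\<dots> = real k * (real k - 1) * p k * x^k" by (simp only: e)
      finally show ?thesis by (simp add: algebra_simps)
    next
      case False
      then have "k = 0 \<or> k = 1" by auto
      then show ?thesis by auto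
    qed
  qed
qed

end



definition rr :: "nat \<Rightarrow> real \<Rightarrow> real" where
  "rr k x = (if k = 1 then -1 else (\<Sum>i\<in>{1..k-2}. x^i))"

lemma geom1: "(1-x) * (\<Sum>i\<in>{1..m}. x^i) = x - x^(Suc m)" for x :: real
proof (induction m)
  case 0
  then show ?case by simp
next
  case (Suc m)
  have "(\<Sum>i\<in>{1..Suc m}. x^i) = (\<Sum>i\<in>{1..m}. x^i) + x^(Suc m)"
    by (simp add: sum.cl_ivl_Suc)
  then have "(1-x) * (\<Sum>i\<in>{1..Suc m}. x^i) = (1-x) * (\<Sum>i\<in>{1..m}. x^i) + (1-x) * x^(Suc m)"
    by (simp add: algebra_simps)
  also have "\<dots> = x - x^(Suc m) + (1-x) * x^(Suc m)" using Suc.IH by simp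
  also have "\<dots> = x - x^(Suc (Suc m))" by (simp add: algebra_simps)
  finally show ?case .
qed

lemma rr_id: "k \<ge> 1 \<Longrightarrow> (1-x) * rr k x = x - x^(k-1)"
proof -
  assume k: "k \<ge> 1"
  show ?thesis
  proof (cases "k = 1")
    case True then show ?thesis by (simp add: rr_def)
  next
    case False
    then have "k - 1 = Suc (k-2)" using k by simp
    then show ?thesis using False geom1[of x "k-2"] by (simp add: rr_def)
  qed
qed

lemma term_id: "real k * a * (x - x^(k-1)) = (1-x) * (real k * a * rr k x)"
proof (cases "k = 0")
  case True then show ?thesis by simp
next
  case False
  then have "(1-x) * rr k x = x - x^(k-1)" by (intro rr_id) simp
  then show ?thesis by (metis mult.left_commute)
qed

lemma geom_nonneg: "0 \<le> x \<Longrightarrow> 0 \<le> (\<Sum>i\<in>{1..m}. x^i)" for x :: real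
  by (intro sum_nonneg) auto

lemma geom_mono: "1 \<le> m \<Longrightarrow> 0 \<le> a \<Longrightarrow> a \<le> b \<Longrightarrow>
   b - a \<le> (\<Sum>i\<in>{1..m}. b^i) - (\<Sum>i\<in>{1..m}. a^i)" for a b :: real
proof (induction m)
  case 0 then show ?case by simp
next
  case (Suc m)
  show ?case
  proof (cases "m = 0")
    case True then show ?thesis by simp
  next
    case False
    then have IH: "b - a \<le> (\<Sum>i\<in>{1..m}. b^i) - (\<Sum>i\<in>{1..m}. a^i)" using Suc by simp
    have "a^(Suc m) \<le> b^(Suc m)" using Suc.prems by (intro power_mono) auto
    then show ?thesis using IH by (simp add: sum.cl_ivl_Suc)
  qed
qed

lemma rr_mono3: "3 \<le> k \<Longrightarrow> 0 \<le> a \<Longrightarrow> a \<le> b \<Longrightarrow> b - a \<le> rr k b - rr k a"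
  unfolding rr_def using geom_mono[of "k-2" a b] by simp

lemma rr_mono: "1 \<le> k \<Longrightarrow> 0 \<le> a \<Longrightarrow> a \<le> b \<Longrightarrow> rr k a \<le> rr k b"
proof -
  assume k: "1 \<le> k" and ab: "0 \<le> a" "a \<le> b"
  consider "k = 1" | "k = 2" | "k \<ge> 3" using k by linarith
  then show ?thesis
  proof cases
    case 3 then show ?thesis using rr_mono3[OF 3 ab] ab by simp
  qed (auto simp: rr_def)
qed

lemma rr_nonneg: "2 \<le> k \<Longrightarrow> 0 \<le> x \<Longrightarrow> 0 \<le> rr k x"
  unfolding rr_def using geom_nonneg[of x "k-2"] by simp

lemma rr_one: "1 \<le> k \<Longrightarrow> rr k 1 = real k - 2"
  unfolding rr_def by (cases "k = 1") (auto simp: of_nat_diff)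

lemma rr_cont: "isCont (rr k) x"
  unfolding rr_def by (cases "k = 1") (auto intro!: continuous_intros)

lemma Em: "1 \<le> m \<Longrightarrow> 0 \<le> z \<Longrightarrow> (1-z)^2 \<le> 1 - (real m + 1) * z^m + real m * z^(Suc m)" for z :: real
proof (induction m)
  case 0 then show ?case by simp
next
  case (Suc m)
  show ?case
  proof (cases "m = 0")
    case True then show ?thesis by (simp add: power2_eq_square algebra_simps)
  next
    case False
    then have IH: "(1-z)^2 \<le> 1 - (real m + 1) * z^m + real m * z^(Suc m)" using Suc by simp
    have id: "1 - (real (Suc m) + 1) * z^(Suc m) + real (Suc m) * z^(Suc (Suc m))
       = (1 - (real m + 1) * z^m + real m * z^(Suc m)) + (real m + 1) * z^m * (1-z)^2"
      by (simp add: power2_eq_square algebra_simps)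
    have "0 \<le> (real m + 1) * z^m * (1-z)^2" using Suc.prems by simp
    then show ?thesis using IH id by linarith
  qed
qed



context offs
begin

lemma root_diff_sums: "\<bar>x\<bar> < 1 \<Longrightarrow> (\<lambda>k. real k * p k * (x - x^(k-1))) sums (mu p * x - F1 p x)"
proof -
  assume x: "\<bar>x\<bar> < 1"
  have "(\<lambda>k. real k * p k * x - real k * p k * x^(k-1)) sums (mu p * x - F1 p x)"
    by (rule sums_diff[OF sums_mult2[OF mu_sums] ks1[OF x]])
  then show ?thesis by (simp add: algebra_simps)
qed

lemma rr_sums:
  assumes "0 \<le> x" "x < 1"
  shows "(\<lambda>k. real k * p k * rr k x) sums ((mu p * x - F1 p x) / (1-x))"
proof -
  have "(\<lambda>k. (1-x) * (real k * p k * rr k x)) sums (mu p * x - F1 p x)"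
    using root_diff_sums[of x] assms unfolding term_id by simp
  then have "(\<lambda>k. (1-x) * (real k * p k * rr k x) / (1-x)) sums ((mu p * x - F1 p x) / (1-x))"
    by (rule sums_divide)
  then show ?thesis using assms by simp
qed

lemma ex_big: "\<exists>k\<ge>3. p k > 0"
proof (rule ccontr)
  assume "\<not> ?thesis"
  then have z: "\<And>k. k \<ge> 3 \<Longrightarrow> p k = 0" using nonneg by (meson le_less not_le)
  have eq: "(\<lambda>k. real k * (real k - 2) * p k) = (\<lambda>k. if k = 1 then - p 1 else 0)"
  proof
    fix k show "real k * (real k - 2) * p k = (if k = 1 then - p 1 else 0)"
    proof -
      consider "k = 0" | "k = 1" | "k = 2" | "k \<ge> 3" by linarith
      then show ?thesis by cases (auto simp: z)
    qed
  qed
  have "(\<lambda>k. if k = 1 then - p 1 else 0) sums (- p 1)"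
    using sums_single[of 1 "\<lambda>_. - p 1"] by simp
  then have "summable (\<lambda>k. real k * (real k - 2) * p k)"
    and "(\<Sum>k. real k * (real k - 2) * p k) = - p 1"
    unfolding eq by (auto simp: sums_iff)
  then show False using supcrit nonneg[of 1] by simp
qed

lemma unique_aux:
  assumes z1: "0 \<le> z1" and z12: "z1 < z2" and z2: "z2 < 1"
    and r1: "F1 p z1 = mu p * z1" and r2: "F1 p z2 = mu p * z2"
  shows False
proof -
  have s1: "(\<lambda>k. real k * p k * rr k z1) sums 0" using rr_sums[of z1] assms by simp
  have s2: "(\<lambda>k. real k * p k * rr k z2) sums 0" using rr_sums[of z2] assms by simp
  have sd: "(\<lambda>k. real k * p k * (rr k z2 - rr k z1)) sums 0"
    using sums_diff[OF s2 s1] by (simp add: algebra_simps)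
  obtain k0 where k0: "k0 \<ge> 3" "p k0 > 0" using ex_big by blast
  have nn: "0 \<le> real k * p k * (rr k z2 - rr k z1)" for k
  proof (cases "k = 0")
    case False
    then have "rr k z1 \<le> rr k z2" using rr_mono[of k z1 z2] assms by simp
    then show ?thesis using nonneg[of k] by simp
  qed simp
  have "z2 - z1 \<le> rr k0 z2 - rr k0 z1" using rr_mono3[OF k0(1) z1] z12 by simp
  then have "0 < real k0 * p k0 * (rr k0 z2 - rr k0 z1)" using k0 z12 by simp
  then have "0 < (\<Sum>k. real k * p k * (rr k z2 - rr k z1))"
    by (intro suminf_pos2[OF sums_summable[OF sd] nn])
  then show False using sd by (simp add: sums_iff)
qed

lemma unique_root:
  assumes "0 \<le> z1" "z1 < 1" "0 \<le> z2" "z2 < 1"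
    and "F1 p z1 = mu p * z1" "F1 p z2 = mu p * z2"
  shows "z1 = z2"
  using unique_aux[of z1 z2] unique_aux[of z2 z1] assms by (cases z1 z2 rule: linorder_cases) auto

lemma ex_pos_partial: "\<exists>N. 0 < (\<Sum>k<N. real k * (real k - 2) * p k)"
proof -
  define a where "a k = real k * (real k - 2) * p k" for k
  show ?thesis
  proof (cases "summable a")
    case True
    then have pos: "suminf a > 0" using supcrit unfolding a_def by auto
    have "(\<lambda>n. \<Sum>i<n. a i) \<longlonglongrightarrow> suminf a" using True by (rule summable_LIMSEQ)
    from order_tendstoD(1)[OF this pos] obtain N where "0 < (\<Sum>i<N. a i)"
      by (auto simp: eventually_sequentially)
    then show ?thesis unfolding a_def by blast
  next
    case False
    show ?thesis
    proof (rule ccontr)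
      assume "\<not> ?thesis"
      then have le: "\<And>N. (\<Sum>k<N. a k) \<le> 0" unfolding a_def by (simp add: not_less)
      have "summable (\<lambda>n. a (n + 2))"
      proof (rule bounded_imp_summable)
        fix n show "0 \<le> a (n+2)" unfolding a_def using nonneg[of "n+2"] by simp
      next
        fix n
        have "(\<Sum>k<Suc (Suc (Suc n)). a k) = a 0 + (a (Suc 0) + (\<Sum>k<Suc n. a (Suc (Suc k))))"
          by (simp only: sum.lessThan_Suc_shift)
        also have "\<dots> = - p 1 + (\<Sum>k\<le>n. a (k+2))"
          unfolding a_def by (simp add: lessThan_Suc_atMost)
        finally show "(\<Sum>k\<le>n. a (k+2)) \<le> p 1" using le[of "Suc (Suc (Suc n))"] by simp
      qed
      then have "summable a" by (rule summable_iff_shift[THEN iffD1])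
      then show False using False by simp
    qed
  qed
qed

lemma ex_sub: "\<exists>s. 0 \<le> s \<and> s < 1 \<and> F1 p s < mu p * s"
proof -
  obtain N where N: "0 < (\<Sum>k<N. real k * (real k - 2) * p k)" using ex_pos_partial by blast
  have N2: "N \<ge> 2"
  proof (rule ccontr)
    assume "\<not> N \<ge> 2"
    then have "N = 0 \<or> N = 1" by auto
    then show False using N by auto
  qed
  define P where "P x = (\<Sum>k<N. real k * p k * rr k x)" for x
  have P1: "P 1 = (\<Sum>k<N. real k * (real k - 2) * p k)"
    unfolding P_def by (intro sum.cong refl) (case_tac "x = 0", auto simp: rr_one)
  have "isCont P 1" unfolding P_def by (intro continuous_intros rr_cont)
  then have "(P \<longlongrightarrow> P 1) (at_left 1)"
    by (simp add: isCont_def filterlim_at_split)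
  from order_tendstoD(1)[OF this] N P1 have ev: "eventually (\<lambda>x. 0 < P x) (at_left (1::real))" by simp
  have ev2: "eventually (\<lambda>x. x \<in> {0<..<1}) (at_left (1::real))"
    by (rule eventually_at_left_real) simp
  from eventually_happens[OF eventually_conj[OF ev ev2]] obtain s where s: "0 < P s" "0 < s" "s < 1"
    by (auto simp: trivial_limit_at_left_real)
  have sm: "(\<lambda>k. real k * p k * rr k s) sums ((mu p * s - F1 p s) / (1-s))"
    using rr_sums s by simp
  have "P s \<le> (\<Sum>k. real k * p k * rr k s)" unfolding P_def
    by (rule sum_le_suminf[OF sums_summable[OF sm]])
       (use N2 nonneg s in \<open>auto intro!: mult_nonneg_nonneg rr_nonneg\<close>)
  then have "0 < (mu p * s - F1 p s) / (1-s)" using s sm by (simp add: sums_iff)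
  then have "F1 p s < mu p * s" using s by (simp add: zero_less_divide_iff)
  then show ?thesis using s by (intro exI[of _ s]) auto
qed

lemma Epos:
  assumes z: "0 \<le> z" "z < 1" and r: "F1 p z = mu p * z"
  shows "F2 p z < mu p"
proof -
  have a: "\<bar>z\<bar> < 1" using z by simp
  have A: "(\<lambda>k. real k * p k - real k * (real k - 1) * p k * z^(k-2)) sums (mu p - F2 p z)"
    by (rule sums_diff[OF mu_sums ks2[OF a]])
  have B: "(\<lambda>k. real k * p k * (z - z^(k-1))) sums 0" using root_diff_sums[OF a] r by simp
  define E where "E k = (1-z) * (1 - (real k - 1) * z^(k-2)) + (z - z^(k-1))" for k
  have C: "(\<lambda>k. real k * p k * E k) sums ((1-z) * (mu p - F2 p z) + 0)"
    using sums_add[OF sums_mult[OF A, of "1-z"] B] unfolding E_def by (simp add: algebra_simps)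
  have Ek: "E k \<ge> (1-z)^2" if "k \<ge> 3" for k
  proof -
    define m where "m = k - 2"
    have m: "k = m + 2" "m \<ge> 1" using that unfolding m_def by auto
    have "E k = 1 - (real m + 1) * z^m + real m * z^(Suc m)"
      unfolding E_def m by (simp add: algebra_simps)
    then show ?thesis using Em[OF m(2) z(1)] by simp
  qed
  have E0: "0 \<le> real k * p k * E k" for k
  proof -
    consider "k = 0" | "k = 1" | "k = 2" | "k \<ge> 3" by linarith
    then show ?thesis
    proof cases
      case 4
      then have "0 \<le> E k" using Ek[OF 4] by (meson order_trans zero_le_power2)
      then show ?thesis using nonneg[of k] by simp
    qed (auto simp: E_def)
  qed
  obtain k0 where k0: "k0 \<ge> 3" "p k0 > 0" using ex_big by blast
  have "0 < (1-z)^2" using z by simp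
  then have "0 < E k0" using Ek[OF k0(1)] by linarith
  then have "0 < real k0 * p k0 * E k0" using k0 by simp
  then have "0 < (\<Sum>k. real k * p k * E k)" by (intro suminf_pos2[OF sums_summable[OF C] E0])
  then have "0 < (1-z) * (mu p - F2 p z)" using C by (simp add: sums_iff)
  then show ?thesis using z by (simp add: zero_less_mult_iff)
qed

end



lemma diffs_sums:
  fixes c :: "nat \<Rightarrow> real"
  assumes "(\<lambda>n. diffs c n * x^n) sums D"
  shows "(\<lambda>n. real n * c n * x^(n-1)) sums D"
  using diffs_equiv[OF sums_summable[OF assms]] sums_unique[OF assms] by simp

lemma trm_sums:
  assumes "(\<lambda>j. r j * b j * x^j) sums B" "(\<lambda>j. real j * r j * x^(j-1)) sums D"
  shows "trm r b x y sums (B + D * y)"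
proof -
  have "(\<lambda>j. r j * b j * x^j + real j * r j * x^(j-1) * y) sums (B + D * y)"
    by (rule sums_add[OF assms(1) sums_mult2[OF assms(2)]])
  then show ?thesis unfolding trm_def by (simp add: algebra_simps)
qed

lemma of_nat_sum_list_map: "real (sum_list (map f xs)) = sum_list (map (\<lambda>x. real (f x)) xs)"
  by (induction xs) auto

lemma nverts_real: "real (nverts (Node ts)) = 1 + sum_list (map (\<lambda>t. real (nverts t)) ts)"
  by (simp add: of_nat_sum_list_map)

lemma nedges_real: "real (nedges (Node ts)) = sum_list (map (\<lambda>t. real (nverts t)) ts)"
  by (simp add: nedges_def of_nat_sum_list_map)

lemma ndeg_sub_real: "real (ndeg_sub k (Node ts)) =
   (if Suc (length ts) = k then 1 else 0) + sum_list (map (\<lambda>t. real (ndeg_sub k t)) ts)"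
  by (simp add: of_nat_sum_list_map)

lemma ndeg_real: "real (ndeg k (Node ts)) =
   (if length ts = k then 1 else 0) + sum_list (map (\<lambda>t. real (ndeg_sub k t)) ts)"
  by (simp add: of_nat_sum_list_map)

context offs
begin

lemma mu_pos': "mu p \<noteq> 0" using mean_pos by simp

lemma q_eq: "qhat p j = diffs p j / mu p"
  by (simp add: qhat_def diffs_def)

lemma q_nonneg: "qhat p j \<ge> 0"
  using nonneg[of "Suc j"] mean_pos by (simp add: qhat_def)

lemma w_nonneg: "gw_sub p t \<ge> 0"
proof (induction t)
  case (Node ts)
  have "prod_list (map (gw_sub p) ts) \<ge> 0"
    by (rule prod_list_nonneg) (use Node in auto)
  then show ?case using q_nonneg by simp
qed

lemma w_phi: "gw_sub p t = phi (qhat p) (\<lambda>_. 1) (gw_sub p) (\<lambda>_. 0) t"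
  by (cases t) simp

lemma q_sums: "\<bar>x\<bar> < 1 \<Longrightarrow> (\<lambda>j. qhat p j * x^j) sums (F1 p x / mu p)"
proof -
  assume x: "\<bar>x\<bar> < 1"
  have "(\<lambda>j. diffs p j * x^j / mu p) sums (F1 p x / mu p)"
    unfolding F1_def by (rule sums_divide[OF summable_sums[OF sum1[OF x]]])
  then show ?thesis by (simp add: q_eq)
qed

lemma qd_sums: "\<bar>x\<bar> < 1 \<Longrightarrow> (\<lambda>j. real j * qhat p j * x^(j-1)) sums (F2 p x / mu p)"
proof -
  assume x: "\<bar>x\<bar> < 1"
  have "(\<lambda>j. diffs (diffs p) j * x^j / mu p) sums (F2 p x / mu p)"
    unfolding F2_def by (rule sums_divide[OF summable_sums[OF sum2[OF x]]])
  then have "(\<lambda>j. diffs (qhat p) j * x^j) sums (F2 p x / mu p)"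
    by (simp add: q_eq diffs_def)
  then show ?thesis by (rule diffs_sums)
qed

lemma W_facts:
  shows "(gw_sub p has_sum zeta p) UNIV" "0 \<le> zeta p" "zeta p < 1"
    "F1 p (zeta p) = mu p * zeta p"
proof -
  obtain s where s: "0 \<le> s" "s < 1" "F1 p s < mu p * s" using ex_sub by blast
  have sa: "\<bar>s\<bar> < 1" using s by simp
  have hs: "(\<Sum>j<L. trm (qhat p) (\<lambda>_. 1) s 0 j) \<le> s" for L
  proof -
    have ts: "trm (qhat p) (\<lambda>_. 1) s 0 sums (F1 p s / mu p + (F2 p s / mu p) * 0)"
      by (rule trm_sums) (use q_sums[OF sa] qd_sums[OF sa] in simp_all)
    have "(\<Sum>j<L. trm (qhat p) (\<lambda>_. 1) s 0 j) \<le> suminf (trm (qhat p) (\<lambda>_. 1) s 0)"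
      by (rule sum_le_suminf[OF sums_summable[OF ts]]) (auto intro!: trm_nonneg q_nonneg s)
    also have "\<dots> = F1 p s / mu p" using ts by (simp add: sums_iff)
    also have "\<dots> \<le> s" using s mean_pos by (simp add: divide_le_eq mult.commute)
    finally show ?thesis .
  qed
  have hw0: "gw_sub p t * 0 = phi (qhat p) (\<lambda>_. 0) (gw_sub p) (\<lambda>_. 0) t" for t
    by (cases t) simp
  have bnd: "sum (gw_sub p) F \<le> s" if "finite F" for F
    using height_bound[of "qhat p" "\<lambda>_. 0" "gw_sub p" "\<lambda>_. 0" s 0 F,
          OF q_nonneg _ w_nonneg _ w_phi hw0 s(1) _ hs _ that] by (simp add: trm_def)
  have summ: "gw_sub p summable_on UNIV"
    by (rule nonneg_bdd_above_summable_on) (use w_nonneg bnd in \<open>auto intro!: bdd_aboveI\<close>)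
  define W where "W = infsum (gw_sub p) UNIV"
  have hw: "(gw_sub p has_sum W) UNIV" using summ W_def by simp
  have W1: "W \<le> s" unfolding W_def by (rule infsum_le_finite_sums[OF summ bnd])
  have W0: "0 \<le> W" unfolding W_def by (rule infsum_nonneg) (use w_nonneg in auto)
  have Wa: "\<bar>W\<bar> < 1" using W0 W1 s by simp
  have "(phi (qhat p) (\<lambda>_. 1) (gw_sub p) (\<lambda>_. 0) has_sum (F1 p W / mu p + (F2 p W / mu p) * 0)) UNIV"
    by (rule phi_has_sum[OF q_nonneg _ w_nonneg _ hw _ trm_sums[OF _ qd_sums[OF Wa]]])
       (use q_sums[OF Wa] in simp_all)
  moreover have "phi (qhat p) (\<lambda>_. 1) (gw_sub p) (\<lambda>_. 0) = gw_sub p" using w_phi by auto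
  ultimately have "(gw_sub p has_sum F1 p W / mu p) UNIV" by simp
  then have eq: "W = F1 p W / mu p" using has_sum_unique hw by blast
  then have root: "F1 p W = mu p * W" using mu_pos' by (simp add: field_simps)
  have "zeta p = W"
    unfolding zeta_def
  proof (rule the_equality)
    show "0 \<le> W \<and> W < 1 \<and> deriv (gf p) W = mu p * W" using W0 W1 s Wa root deriv1 by simp
    fix z assume "0 \<le> z \<and> z < 1 \<and> deriv (gf p) z = mu p * z"
    then show "z = W" using unique_root[of z W] W0 W1 s root deriv1[of z] by simp
  qed
  then show "(gw_sub p has_sum zeta p) UNIV" "0 \<le> zeta p" "zeta p < 1"
    "F1 p (zeta p) = mu p * zeta p" using hw W0 W1 s root by simp_all
qed

lemma D_pos: "mu p - F2 p (zeta p) > 0"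
  using Epos[of "zeta p"] W_facts by simp

lemma V_facts:
  assumes a: "\<And>j. 0 \<le> a j" and g: "\<And>t. 0 \<le> g t"
    and wg: "\<And>t. gw_sub p t * g t = phi (qhat p) a (gw_sub p) g t"
    and al: "(\<lambda>j. qhat p j * a j * zeta p ^ j) sums al"
  shows "((\<lambda>t. gw_sub p t * g t) has_sum (al * mu p / (mu p - F2 p (zeta p)))) UNIV"
proof -
  define z where "z = zeta p"
  have z: "0 \<le> z" "z < 1" "F1 p z = mu p * z" "\<bar>z\<bar> < 1" using W_facts unfolding z_def by auto
  have hw: "(gw_sub p has_sum z) UNIV" using W_facts z_def by simp
  define c where "c = F2 p z / mu p"
  have c1: "c < 1" using D_pos mean_pos unfolding c_def z_def by (simp add: divide_less_eq)
  have al0: "0 \<le> al" using sums_le[OF _ sums_zero al] a q_nonneg W_facts(2) by simp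
  define K where "K = al / (1 - c)"
  have K0: "0 \<le> K" using al0 c1 unfolding K_def by simp
  have Kc: "al + c * K = K" using c1 unfolding K_def by (simp add: field_simps)
  have hs: "(\<Sum>j<L. trm (qhat p) (\<lambda>_. 1) z 0 j) \<le> z" for L
  proof -
    have ts: "trm (qhat p) (\<lambda>_. 1) z 0 sums (F1 p z / mu p + (F2 p z / mu p) * 0)"
      by (rule trm_sums) (use q_sums[OF z(4)] qd_sums[OF z(4)] in simp_all)
    have "(\<Sum>j<L. trm (qhat p) (\<lambda>_. 1) z 0 j) \<le> suminf (trm (qhat p) (\<lambda>_. 1) z 0)"
      by (rule sum_le_suminf[OF sums_summable[OF ts]]) (auto intro!: trm_nonneg q_nonneg z)
    also have "\<dots> = z" using ts z mu_pos' by (simp add: sums_iff)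
    finally show ?thesis .
  qed
  have hK: "(\<Sum>j<L. trm (qhat p) a z K j) \<le> K" for L
  proof -
    have ts: "trm (qhat p) a z K sums (al + c * K)"
      unfolding c_def by (rule trm_sums[OF al[folded z_def] qd_sums[OF z(4)]])
    have "(\<Sum>j<L. trm (qhat p) a z K j) \<le> suminf (trm (qhat p) a z K)"
      by (rule sum_le_suminf[OF sums_summable[OF ts]]) (auto intro!: trm_nonneg q_nonneg z a K0)
    also have "\<dots> = K" using ts Kc by (simp add: sums_iff)
    finally show ?thesis .
  qed
  have bnd: "(\<Sum>t\<in>F. gw_sub p t * g t) \<le> K" if "finite F" for F
    using height_bound[of "qhat p" a "gw_sub p" g z K F, OF q_nonneg a w_nonneg g w_phi wg z(1) K0 hs hK that]
    by simp
  have summ: "(\<lambda>t. gw_sub p t * g t) summable_on UNIV"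
    by (rule nonneg_bdd_above_summable_on) (use w_nonneg g bnd in \<open>auto intro!: bdd_aboveI\<close>)
  define V where "V = infsum (\<lambda>t. gw_sub p t * g t) UNIV"
  have hv: "((\<lambda>t. gw_sub p t * g t) has_sum V) UNIV" using summ V_def by simp
  have "(phi (qhat p) a (gw_sub p) g has_sum (al + c * V)) UNIV"
    unfolding c_def
    by (rule phi_has_sum[OF q_nonneg a w_nonneg g hw hv trm_sums[OF al[folded z_def] qd_sums[OF z(4)]]])
  moreover have "phi (qhat p) a (gw_sub p) g = (\<lambda>t. gw_sub p t * g t)" using wg by auto
  ultimately have "((\<lambda>t. gw_sub p t * g t) has_sum (al + c * V)) UNIV" by simp
  then have "V = al + c * V" using has_sum_unique hv by blast
  then have "V = al / (1 - c)" using c1 by (simp add: field_simps)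
  also have "\<dots> = al * mu p / (mu p - F2 p z)"
    unfolding c_def using mean_pos D_pos z_def by (simp add: field_simps)
  finally show ?thesis using hv z_def by simp
qed

lemma root_has_sum:
  assumes b: "\<And>j. 0 \<le> b j" and g: "\<And>t. 0 \<le> g t"
    and hG: "\<And>t. gw_prob p t * G t = phi p b (gw_sub p) g t"
    and B: "(\<lambda>j. p j * b j * zeta p ^ j) sums B"
    and hv: "((\<lambda>t. gw_sub p t * g t) has_sum V) UNIV"
  shows "((\<lambda>t. gw_prob p t * G t) has_sum (B + F1 p (zeta p) * V)) UNIV"
proof -
  have z: "\<bar>zeta p\<bar> < 1" using W_facts by simp
  have "(phi p b (gw_sub p) g has_sum (B + F1 p (zeta p) * V)) UNIV"
    by (rule phi_has_sum[OF nonneg b w_nonneg g W_facts(1) hv trm_sums[OF B]])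
       (use ks1[OF z] in \<open>simp add: mult.commute mult.left_commute\<close>)
  moreover have "phi p b (gw_sub p) g = (\<lambda>t. gw_prob p t * G t)" using hG by auto
  ultimately show ?thesis by simp
qed

end



theorem lemma11p1:
  fixes p :: "nat \<Rightarrow> real"
  assumes nonneg: "\<And>k. p k \<ge> 0"
    and prob: "p sums 1"
    and mean_fin: "summable (\<lambda>k. real k * p k)"
    and mean_pos: "mu p > 0"
    and supcrit: "\<not> summable (\<lambda>k. real k * (real k - 2) * p k)
                  \<or> (\<Sum>k. real k * (real k - 2) * p k) > 0"
  shows "sigma_sq p (\<lambda>_. 1) =
    (let f = gf p; f1 = deriv (gf p); f2 = deriv (deriv (gf p)); m = mu p; z = zeta p
     in f z + m^2 * z^2 / (m - f2 z) + 2 * (m^3 * z^4 / (m - f2 z)^2)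
        - f (z^2) - 2 * (m * z^2 / (m - f2 z)) * f1 (z^2)
        - m^2 / (m - f2 z)^2 * (z^4 * f2 (z^2) + z^2 * f1 (z^2)))"
proof -
  interpret offs p using assms by unfold_locales
  define z where "z = zeta p"
  define m where "m = mu p"
  define D where "D = m - F2 p z"
  have z: "0 \<le> z" "z < 1" "F1 p z = m * z" "\<bar>z\<bar> < 1"
    using W_facts unfolding z_def m_def by auto
  have D: "D > 0" using D_pos unfolding D_def z_def m_def .
  have m: "m > 0" using mean_pos unfolding m_def .
  have z2: "\<bar>z^2\<bar> < 1" using z by (simp add: power_less_one_iff abs_square_less_1)
  have hvv: "((\<lambda>t. gw_sub p t * real (nverts t)) has_sum (z * m / D)) UNIV"
  proof -
    have "((\<lambda>t. gw_sub p t * real (nverts t)) has_sum (F1 p (zeta p) / mu p * mu p / (mu p - F2 p (zeta p)))) UNIV"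
      by (rule V_facts[where a="\<lambda>_. 1"])
         (use q_sums[OF z(4)[unfolded z_def]] in \<open>auto\<close>,
          case_tac t, simp add: of_nat_sum_list_map)
    then show ?thesis using z m unfolding z_def[symmetric] m_def[symmetric] D_def by simp
  qed
  have hvk: "((\<lambda>t. gw_sub p t * real (ndeg_sub k t)) has_sum (real k * p k * z^(k-1) / D)) UNIV" for k
  proof -
    define al where "al = real k * p k * z^(k-1) / m"
    have al: "(\<lambda>j. qhat p j * (if Suc j = k then 1 else 0) * zeta p ^ j) sums al"
    proof (cases k)
      case 0
      then show ?thesis unfolding al_def by simp
    next
      case (Suc k')
      have "(\<lambda>j. if j = k' then qhat p j * zeta p ^ j else 0) sums (qhat p k' * zeta p ^ k')"
        by (rule sums_single)
      moreover have "qhat p k' * zeta p ^ k' = al"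
        unfolding al_def qhat_def Suc m_def z_def by simp
      moreover have "(\<lambda>j. qhat p j * (if Suc j = k then 1 else 0) * zeta p ^ j)
          = (\<lambda>j. if j = k' then qhat p j * zeta p ^ j else 0)" using Suc by (auto simp: fun_eq_iff)
      ultimately show ?thesis by simp
    qed
    have "((\<lambda>t. gw_sub p t * real (ndeg_sub k t)) has_sum (al * mu p / (mu p - F2 p (zeta p)))) UNIV"
      by (rule V_facts[OF _ _ _ al]) (auto, case_tac t, simp add: of_nat_sum_list_map)
    then show ?thesis using m unfolding al_def z_def[symmetric] m_def[symmetric] D_def by simp
  qed
  have ET: "Efin p (\<lambda>t. real (nverts t)) = gf p z + m * z * (z * m / D)"
  proof -
    have "((\<lambda>t. gw_prob p t * real (nverts t)) has_sum (gf p z + F1 p (zeta p) * (z * m / D))) UNIV"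
      by (rule root_has_sum[where b="\<lambda>_. 1" and g="\<lambda>t. real (nverts t)", OF _ _ _ _ hvv])
         (use summable_sums[OF sumP[OF z(4)]] in \<open>auto simp: gf_def z_def\<close>, case_tac t, simp add: of_nat_sum_list_map)
    then show ?thesis unfolding Efin_def using z z_def by (simp add: infsumI)
  qed
  have EE: "Efin p (\<lambda>t. real (nedges t)) = m * z * (z * m / D)"
  proof -
    have "((\<lambda>t. gw_prob p t * real (nedges t)) has_sum (0 + F1 p (zeta p) * (z * m / D))) UNIV"
      by (rule root_has_sum[where b="\<lambda>_. 0" and g="\<lambda>t. real (nverts t)", OF _ _ _ _ hvv])
         (auto, case_tac t, simp add: of_nat_sum_list_map nedges_def)
    then show ?thesis unfolding Efin_def using z z_def by (simp add: infsumI)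
  qed
  have EN: "Efin p (\<lambda>t. real (ndeg k t)) = p k * z^k * (1 + m / D * real k)" for k
  proof -
    have B: "(\<lambda>j. p j * (if j = k then 1 else 0) * zeta p ^ j) sums (p k * z^k)"
    proof -
      have "(\<lambda>j. p j * (if j = k then 1 else 0) * zeta p ^ j) = (\<lambda>j. if j = k then p j * zeta p ^ j else 0)"
        by (auto simp: fun_eq_iff)
      then show ?thesis using sums_single[of k "\<lambda>j. p j * zeta p ^ j"] unfolding z_def by simp
    qed
    have "((\<lambda>t. gw_prob p t * real (ndeg k t)) has_sum (p k * z^k + F1 p (zeta p) * (real k * p k * z^(k-1) / D))) UNIV"
      by (rule root_has_sum[OF _ _ _ B hvk]) (auto, case_tac t, simp add: of_nat_sum_list_map)
    then have "Efin p (\<lambda>t. real (ndeg k t)) = p k * z^k + m * z * (real k * p k * z^(k-1) / D)"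
      unfolding Efin_def using z z_def by (simp add: infsumI)
    also have "\<dots> = p k * z^k * (1 + m / D * real k)"
    proof (cases k)
      case 0 then show ?thesis by simp
    next
      case (Suc k')
      then show ?thesis using D by (simp add: field_simps)
    qed
    finally show ?thesis .
  qed
  define C where "C = m / D"
  have sq: "(\<lambda>k. (Efin p (\<lambda>t. real (ndeg k t)))^2 / p k) sums
      (gf p (z^2) + 2 * C * (z^2 * F1 p (z^2)) + C^2 * ((z^2)^2 * F2 p (z^2) + z^2 * F1 p (z^2)))"
  proof -
    have s1: "(\<lambda>k. p k * (z^2)^k) sums gf p (z^2)"
      unfolding gf_def by (rule summable_sums[OF sumP[OF z2]])
    have "(\<lambda>k. p k * (z^2)^k + 2 * C * (real k * p k * (z^2)^k) + C^2 * (real k * real k * p k * (z^2)^k))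
          sums (gf p (z^2) + 2 * C * (z^2 * F1 p (z^2)) + C^2 * ((z^2)^2 * F2 p (z^2) + z^2 * F1 p (z^2)))"
      by (intro sums_add sums_mult s1 kx_sums[OF z2] kkx_sums[OF z2])
    then show ?thesis
    proof (rule sums_cong[THEN iffD1, rotated])
      fix k
      show "p k * (z^2)^k + 2 * C * (real k * p k * (z^2)^k) + C^2 * (real k * real k * p k * (z^2)^k)
            = (Efin p (\<lambda>t. real (ndeg k t)))^2 / p k"
      proof (cases "p k = 0")
        case True then show ?thesis unfolding EN[of k] by simp
      next
        case False
        then show ?thesis using D unfolding C_def EN[of k]
          by (simp add: field_simps power2_eq_square power_mult_distrib power_mult[symmetric])
      qed
    qed
  qed
  have f1: "deriv (gf p) (z^2) = F1 p (z^2)" by (rule deriv1[OF z2])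
  have f2: "deriv (deriv (gf p)) (z^2) = F2 p (z^2)" "deriv (deriv (gf p)) z = F2 p z"
    by (rule deriv2[OF z2], rule deriv2[OF z(4)])
  have "sigma_sq p (\<lambda>_. 1) = (gf p z + m * z * (z * m / D)) + 2 / m * (m * z * (z * m / D))^2
      - (gf p (z^2) + 2 * C * (z^2 * F1 p (z^2)) + C^2 * ((z^2)^2 * F2 p (z^2) + z^2 * F1 p (z^2)))"
    unfolding sigma_sq_def using ET EE sums_unique[OF sq] by (simp add: m_def)
  also have "\<dots> = (let f = gf p; f1 = deriv (gf p); f2 = deriv (deriv (gf p)); m = mu p; z = zeta p
     in f z + m^2 * z^2 / (m - f2 z) + 2 * (m^3 * z^4 / (m - f2 z)^2)
        - f (z^2) - 2 * (m * z^2 / (m - f2 z)) * f1 (z^2)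
        - m^2 / (m - f2 z)^2 * (z^4 * f2 (z^2) + z^2 * f1 (z^2)))"
    unfolding Let_def z_def[symmetric] m_def[symmetric] f1 f2 D_def[symmetric] C_def
    using D m by (simp add: field_simps power2_eq_square eval_nat_numeral)
  finally show ?thesis .
qed

end
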